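(* $\mathrm{Pol}(\mathbb{M}_0)$ does not satisfy $\Sigma_2$, but $\mathrm{Pol}(\mathbb{M}_1)$ satisfies $\Sigma_2$.
   Context: $\psi_2=\{(0,1),(1,0),(2,2)\}$; $\mu_2$ is the equivalence relation on $\{0,1,2\}$ with classes $\{0,1\},\{2\}$ and $\rho_2=\{0,1,2\}^2\setminus\mu_2$. $\mathbb{M}_0=(\{0,1,2\};\psi_2,\rho_2,\{0,1\},\{0\},\{1\},\{2\})$ and $\mathbb{M}_1=(\{0,1,2\};\psi_2,\mu_2,\{0\},\{1\},\{2\})$; $\mathrm{Pol}$ denotes the clone of all operations preserving the given relations. A clone satisfies $\Sigma_2$ if it contains a 5-ary symmetric operation $f$ (invariant under all permutations of its arguments) satisfying $f(x,x,y,y,z)\approx f(x,y,y,z,z)$. *)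

theory Defs
  imports "HOL-Combinatorics.Permutations"
begin

text \<open>Operations on the domain D are functions on argument lists; an n-ary
operation is only considered on lists of length n over D.
A relational structure is a domain together with a list of relations,
each given with its arity m as a set of m-tuples (lists of length m).\<close>

definition D3 :: "nat set" where "D3 = {0,1,2}"

definition preserves :: "nat \<Rightarrow> (nat list \<Rightarrow> nat) \<Rightarrow> nat \<Rightarrow> nat list set \<Rightarrow> bool" where
  "preserves n f m R \<longleftrightarrow>
     (\<forall>ts. length ts = n \<longrightarrow> set ts \<subseteq> R \<longrightarrow>
        map (\<lambda>i. f (map (\<lambda>t. t ! i) ts)) [0..<m] \<in> R)"

definition Pol :: "nat set \<Rightarrow> (nat \<times> nat list set) list \<Rightarrow> nat \<Rightarrow> (nat list \<Rightarrow> nat) set" where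
  "Pol A Rs n = {f. (\<forall>xs. length xs = n \<longrightarrow> set xs \<subseteq> A \<longrightarrow> f xs \<in> A) \<and>
                    (\<forall>(m, R) \<in> set Rs. preserves n f m R)}"

definition symmetric_op :: "nat set \<Rightarrow> nat \<Rightarrow> (nat list \<Rightarrow> nat) \<Rightarrow> bool" where
  "symmetric_op A n f \<longleftrightarrow>
     (\<forall>xs \<sigma>. length xs = n \<longrightarrow> set xs \<subseteq> A \<longrightarrow> \<sigma> permutes {..<n} \<longrightarrow>
        f (map (\<lambda>i. xs ! \<sigma> i) [0..<n]) = f xs)"

definition satisfies_Sigma2 :: "nat set \<Rightarrow> (nat \<Rightarrow> (nat list \<Rightarrow> nat) set) \<Rightarrow> bool" where
  "satisfies_Sigma2 A C \<longleftrightarrow>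
     (\<exists>f \<in> C 5. symmetric_op A 5 f \<and>
        (\<forall>x\<in>A. \<forall>y\<in>A. \<forall>z\<in>A. f [x,x,y,y,z] = f [x,y,y,z,z]))"

definition psi2 :: "nat list set" where "psi2 = {[0,1],[1,0],[2,2]}"

definition mu2 :: "nat list set" where
  "mu2 = {[x,y] | x y. (x \<in> {0,1} \<and> y \<in> {0,1}) \<or> (x = 2 \<and> y = 2)}"

definition rho2 :: "nat list set" where
  "rho2 = {[x,y] | x y. x \<in> D3 \<and> y \<in> D3} - mu2"

definition M0 :: "(nat \<times> nat list set) list" where
  "M0 = [(2, psi2), (2, rho2), (1, {[0],[1]}), (1, {[0]}), (1, {[1]}), (1, {[2]})]"

definition M1 :: "(nat \<times> nat list set) list" where
  "M1 = [(2, psi2), (2, mu2), (1, {[0]}), (1, {[1]}), (1, {[2]})]"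

end

theory Submission
  imports Defs
begin

definition fM :: "nat list \<Rightarrow> nat" where
  "fM xs = (if set xs \<subseteq> {0,1} then (if 2 * count (mset xs) 1 > length xs then 1 else 0) else 2)"

lemma fM_mset: "mset xs = mset ys \<Longrightarrow> fM xs = fM ys"
proof -
  assume a: "mset xs = mset ys"
  have "set xs = set ys" using a by (rule mset_eq_setD)
  moreover have "length xs = length ys" using a by (rule mset_eq_length)
  ultimately show ?thesis unfolding fM_def using a by simp
qed

definition sw :: "nat \<Rightarrow> nat" where "sw x = (if x = 0 then 1 else if x = 1 then 0 else x)"

lemma count_sw:
  assumes "set xs \<subseteq> {0,1}"
  shows "count (mset (map sw xs)) 1 + count (mset xs) 1 = length xs"
  using assms by (induct xs) (auto simp: sw_def)

lemma fM_sw: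
  assumes "set xs \<subseteq> {0,1,2}" "odd (length xs)"
  shows "fM (map sw xs) = sw (fM xs)"
proof (cases "set xs \<subseteq> {0,1}")
  case True
  have s: "set (map sw xs) \<subseteq> {0,1}" using True by (auto simp: sw_def)
  have c: "count (mset (map sw xs)) 1 + count (mset xs) 1 = length xs" using count_sw[OF True] .
  have ne: "2 * count (mset xs) 1 \<noteq> length xs" using assms(2) by presburger
  have f1: "fM xs = (if 2 * count (mset xs) 1 > length xs then 1 else 0)"
    using True unfolding fM_def by (simp only: if_True)
  have f2: "fM (map sw xs) = (if 2 * count (mset (map sw xs)) 1 > length xs then 1 else 0)"
    using s unfolding fM_def length_map by (simp only: if_True)
  have iff: "2 * count (mset (map sw xs)) 1 > length xs \<longleftrightarrow> \<not> 2 * count (mset xs) 1 > length xs"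
    using c ne by linarith
  show ?thesis unfolding f1 f2 iff by (simp add: sw_def)
next
  case False
  then obtain x where x: "x \<in> set xs" "x \<notin> {0,1}" by auto
  then have "sw x \<in> set (map sw xs)" "sw x \<notin> {0,1}" by (auto simp: sw_def)
  then have "\<not> set (map sw xs) \<subseteq> {0,1}" by blast
  then show ?thesis using False unfolding fM_def by (simp add: sw_def)
qed

lemma psi2_elem: "t \<in> psi2 \<Longrightarrow> length t = 2 \<and> t ! 1 = sw (t ! 0) \<and> t ! 0 \<in> {0,1,2}"
  unfolding psi2_def sw_def by auto

lemma mu2_elem: "t \<in> mu2 \<Longrightarrow> length t = 2 \<and> (t ! 0 \<in> {0,1} \<longleftrightarrow> t ! 1 \<in> {0,1})"
  unfolding mu2_def by auto

lemma fM_range: "fM xs \<in> {0,1,2}" unfolding fM_def by auto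

lemma fM_01: "fM xs \<in> {0,1} \<longleftrightarrow> set xs \<subseteq> {0,1}" unfolding fM_def by auto

lemma mu2_intro: "a \<in> {0,1,2} \<Longrightarrow> b \<in> {0,1,2} \<Longrightarrow> (a \<in> {0,1}) = (b \<in> {0,1}) \<Longrightarrow> [a,b] \<in> mu2"
  unfolding mu2_def by auto

lemma ball_iff: "\<forall>t\<in>A. P t = Q t \<Longrightarrow> (\<forall>t\<in>A. Q t) = (\<forall>t\<in>A. P t)"
  by blast

lemma pres_psi: "preserves 5 fM 2 psi2"
  unfolding preserves_def
proof (intro allI impI)
  fix ts :: "nat list list"
  assume l: "length ts = 5" and s: "set ts \<subseteq> psi2"
  have e: "map (\<lambda>t. t ! 1) ts = map sw (map (\<lambda>t. t ! 0) ts)"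
    using s psi2_elem by (induct ts) auto
  have r0: "\<forall>t\<in>set ts. t ! 0 \<in> {0,1,2}" using s psi2_elem by blast
  have r: "set (map (\<lambda>t. t ! 0) ts) \<subseteq> {0,1,2}" using r0 by auto
  have "map (\<lambda>i. fM (map (\<lambda>t. t ! i) ts)) [0..<2] = [fM (map (\<lambda>t. t ! 0) ts), fM (map (\<lambda>t. t ! 1) ts)]"
    by (simp add: upt_rec)
  also have "\<dots> = [fM (map (\<lambda>t. t ! 0) ts), sw (fM (map (\<lambda>t. t ! 0) ts))]"
  proof -
    have "fM (map (\<lambda>t. t ! 1) ts) = sw (fM (map (\<lambda>t. t ! 0) ts))"
      by (subst e) (rule fM_sw[OF r], simp add: l)
    then show ?thesis by simp
  qed
  also have "\<dots> \<in> psi2" using fM_range[of "map (\<lambda>t. t ! 0) ts"]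
    unfolding psi2_def sw_def by auto
  finally show "map (\<lambda>i. fM (map (\<lambda>t. t ! i) ts)) [0..<2] \<in> psi2" .
qed

lemma pres_mu: "preserves 5 fM 2 mu2"
  unfolding preserves_def
proof (intro allI impI)
  fix ts :: "nat list list"
  assume l: "length ts = 5" and s: "set ts \<subseteq> mu2"
  have e: "set (map (\<lambda>t. t ! 1) ts) \<subseteq> {0,1} \<longleftrightarrow> set (map (\<lambda>t. t ! 0) ts) \<subseteq> {0,1}"
  proof -
    have "\<forall>t\<in>set ts. (t ! 0 \<in> {0,1}) = (t ! 1 \<in> {0,1})" using s mu2_elem by blast
    then show ?thesis unfolding set_map image_subset_iff by (rule ball_iff)
  qed
  have "map (\<lambda>i. fM (map (\<lambda>t. t ! i) ts)) [0..<2] = [fM (map (\<lambda>t. t ! 0) ts), fM (map (\<lambda>t. t ! 1) ts)]"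
    by (simp add: upt_rec)
  also have "\<dots> \<in> mu2"
  proof (rule mu2_intro[OF fM_range fM_range])
    show "(fM (map (\<lambda>t. t ! 0) ts) \<in> {0, 1}) = (fM (map (\<lambda>t. t ! 1) ts) \<in> {0, 1})"
      unfolding fM_01 using e by (rule sym)
  qed
  finally show "map (\<lambda>i. fM (map (\<lambda>t. t ! i) ts)) [0..<2] \<in> mu2" .
qed

lemma pres_const:
  assumes "c \<in> {0,1,2::nat}"
  shows "preserves 5 fM 1 {[c]}"
  unfolding preserves_def
proof (intro allI impI)
  fix ts :: "nat list list"
  assume l: "length ts = 5" and s: "set ts \<subseteq> {[c]}"
  have "replicate (length (map (\<lambda>t. t ! 0) ts)) c = map (\<lambda>t. t ! 0) ts"
    by (rule replicate_length_same) (use s in auto)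
  then have e: "map (\<lambda>t. t ! 0) ts = replicate 5 c" using l by simp
  show "map (\<lambda>i. fM (map (\<lambda>t. t ! i) ts)) [0..<1] \<in> {[c]}"
  proof -
    have "c = 0 \<or> c = 1 \<or> c = 2" using assms by auto
    have r5: "replicate 5 c = [c,c,c,c,c]" by (simp add: numeral_eq_Suc)
    from \<open>c = 0 \<or> c = 1 \<or> c = 2\<close> have "fM [c,c,c,c,c] = c" by (elim disjE) (simp_all add: fM_def)
    then have "fM (replicate 5 c) = c" by (simp only: r5)
    moreover have "map (\<lambda>i. fM (map (\<lambda>t. t ! i) ts)) [0..<1] = [fM (map (\<lambda>t. t ! 0) ts)]" by simp
    ultimately show ?thesis by (simp only: e) simp
  qed
qed

lemma idt_gen: "fM [x,x,y,y,z] = fM [x,y,y,z,z]"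
proof (cases "x \<in> {0,1} \<and> y \<in> {0,1} \<and> z \<in> {0,1}")
  case True
  then have "x = 0 \<or> x = 1" "y = 0 \<or> y = 1" "z = 0 \<or> z = 1" by auto
  then show ?thesis by (elim disjE) (simp_all add: fM_def)
next
  case False
  then have "\<not> set [x,x,y,y,z] \<subseteq> {0,1}" "\<not> set [x,y,y,z,z] \<subseteq> {0,1}" by auto
  then show ?thesis unfolding fM_def by presburger
qed

lemma part2: "satisfies_Sigma2 D3 (Pol D3 M1)"
  unfolding satisfies_Sigma2_def
proof (intro bexI conjI)
  show "fM \<in> Pol D3 M1 5"
    unfolding Pol_def M1_def D3_def
    using pres_psi pres_mu pres_const[of 0] pres_const[of 1] pres_const[of 2] fM_range
    by auto
  show "symmetric_op D3 5 fM"
    unfolding symmetric_op_def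
  proof (intro allI impI)
    fix xs :: "nat list" and \<sigma> :: "nat \<Rightarrow> nat"
    assume "length xs = 5" "\<sigma> permutes {..<5}"
    then have "mset (permute_list \<sigma> xs) = mset xs" by (simp add: mset_permute_list)
    then show "fM (map (\<lambda>i. xs ! \<sigma> i) [0..<5]) = fM xs"
      using \<open>length xs = 5\<close> by (metis fM_mset permute_list_def)
  qed
  show "\<forall>x\<in>D3. \<forall>y\<in>D3. \<forall>z\<in>D3. fM [x, x, y, y, z] = fM [x, y, y, z, z]"
    using idt_gen by blast
qed

lemma sym_use:
  assumes "symmetric_op D3 5 f" "set xs \<subseteq> D3" "length xs = 5" "\<sigma> permutes {..<5}"
  shows "f (map (\<lambda>i. xs ! \<sigma> i) [0..<5]) = f xs"
  using assms unfolding symmetric_op_def by blast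

lemma length_5: "length [a,b,c,d,e::'a] = 5" by simp

lemma psi_pair: "[a,a] \<in> psi2 \<Longrightarrow> a = 2" by (auto simp: psi2_def)

lemma rho_pair: "[a,2] \<in> rho2 \<Longrightarrow> a \<noteq> 2" by (auto simp: rho2_def mu2_def)

lemma rho_mem: "x \<in> {0,1} \<Longrightarrow> [x,2] \<in> rho2 \<and> [2,x] \<in> rho2"
  unfolding rho2_def mu2_def D3_def by auto

lemma part1: "\<not> satisfies_Sigma2 D3 (Pol D3 M0)"
proof
  assume "satisfies_Sigma2 D3 (Pol D3 M0)"
  then obtain f where fP: "f \<in> Pol D3 M0 5" and sy: "symmetric_op D3 5 f"
    and id: "\<forall>x\<in>D3. \<forall>y\<in>D3. \<forall>z\<in>D3. f [x,x,y,y,z] = f [x,y,y,z,z]"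
    unfolding satisfies_Sigma2_def by blast
  have ps: "preserves 5 f 2 psi2" and rh: "preserves 5 f 2 rho2"
    using fP unfolding Pol_def M0_def by auto
  have D: "{0,1,2} = D3" by (simp add: D3_def)
  have p1: "(transpose 1 3 \<circ> transpose 0 2) permutes {..<5::nat}"
    by (intro permutes_compose permutes_swap_id) auto
  have p2: "transpose 3 4 permutes {..<5::nat}"
    by (intro permutes_swap_id) auto
  have a1: "f [1,1,0,0,2] = f [0,0,1,1,2]"
    using sym_use[OF sy _ _ p1, of "[0,0,1,1,2]"] by (simp add: D3_def upt_rec Transposition.transpose_def)
  have a2: "f [2,2,2,1,0] = f [2,2,2,0,1]"
    using sym_use[OF sy _ _ p2, of "[2,2,2,0,1]"] by (simp add: D3_def upt_rec Transposition.transpose_def)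
  have "[f [0,0,1,1,2], f [1,1,0,0,2]] \<in> psi2"
  proof -
    have "set [[0,1],[0,1],[1,0],[1,0],[2,2::nat]] \<subseteq> psi2" by (simp add: psi2_def)
    then have "map (\<lambda>i. f (map (\<lambda>t. t ! i) [[0,1],[0,1],[1,0],[1,0],[2,2::nat]])) [0..<2] \<in> psi2"
      using ps unfolding preserves_def by (meson length_5)
    then show ?thesis by (simp add: upt_rec)
  qed
  then have b1: "f [0,0,1,1,2] = 2" using a1 psi_pair by metis
  have "[f [2,2,2,0,1], f [2,2,2,1,0]] \<in> psi2"
  proof -
    have "set [[2,2],[2,2],[2,2],[0,1],[1,0::nat]] \<subseteq> psi2" by (simp add: psi2_def)
    then have "map (\<lambda>i. f (map (\<lambda>t. t ! i) [[2,2],[2,2],[2,2],[0,1],[1,0::nat]])) [0..<2] \<in> psi2"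
      using ps unfolding preserves_def by (meson length_5)
    then show ?thesis by (simp add: upt_rec)
  qed
  then have b2: "f [2,2,2,0,1] = 2" using a2 psi_pair by metis
  have "[f [0,1,1,2,2], f [2,2,2,0,1]] \<in> rho2"
  proof -
    have "set [[0,2],[1,2],[1,2],[2,0],[2,1::nat]] \<subseteq> rho2" using rho_mem by simp
    then have "map (\<lambda>i. f (map (\<lambda>t. t ! i) [[0,2],[1,2],[1,2],[2,0],[2,1::nat]])) [0..<2] \<in> rho2"
      using ps rh unfolding preserves_def by (meson length_5)
    then show ?thesis by (simp add: upt_rec)
  qed
  then have b3: "f [0,1,1,2,2] \<noteq> 2" using b2 rho_pair by metis
  have "f [0,0,1,1,2] = f [0,1,1,2,2]" using id by (simp add: D3_def)
  then show False using b1 b3 by simp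
qed

theorem lemma6p8:
  shows "\<not> satisfies_Sigma2 D3 (Pol D3 M0) \<and> satisfies_Sigma2 D3 (Pol D3 M1)"
  using part1 part2 by blast

end
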